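(* For $t\in\mathbb R$ and $T>1$ let $K_T(t)=\{k\in K:a_tk\in HKA^+_{\log T}\}$. Then: (1) for all $0\le t<\log T$, $e\in K_T(t)$; (2) for all $t>\log T$, $K_T(t)=\emptyset$; (3) for any $\epsilon>0$ there exists $T_0(\epsilon)\ge1$ such that $K_T(t)\subset K_\epsilon M$ for all $t>T_0(\epsilon)$.
   Context: $G=\mathrm{PSL}_2(\mathbb C)$, $K=\mathrm{PSU}(2)$, $a_t=\mathrm{diag}(e^{t/2},e^{-t/2})$, $A^+_s=\{a_t:0\le t\le s\}$, $M=\{\mathrm{diag}(e^{i\theta},e^{-i\theta})\}$, $H$ the stabilizer in $G$ of the unit circle centered at $0$. With a fixed left-invariant metric on $G$, $U_\epsilon$ is the $\epsilon$-ball around $e$ and $K_\epsilon=K\cap U_\epsilon$. *)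

theory Defs
  imports "HOL-Analysis.Analysis"
begin

text \<open>G = PSL_2(C) is modelled through SL_2(C) (2x2 complex matrices of determinant 1);
  all subsets of G used below are represented by their preimages in SL_2(C),
  which are closed under g to -g.\<close>

type_synonym mat2 = "complex^2^2"

definition mat2 :: "complex \<Rightarrow> complex \<Rightarrow> complex \<Rightarrow> complex \<Rightarrow> mat2" where
  "mat2 a b c d = (\<chi> i j. if i = 1 then (if j = 1 then a else b) else (if j = 1 then c else d))"

definition SL2 :: "mat2 set" where
  "SL2 = {g. det g = 1}"

definition cnj_transpose :: "mat2 \<Rightarrow> mat2" where
  "cnj_transpose g = (\<chi> i j. cnj (g $ j $ i))"

definition Kgrp :: "mat2 set" where
  "Kgrp = {g \<in> SL2. g ** cnj_transpose g = mat 1}"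

definition a_t :: "real \<Rightarrow> mat2" where
  "a_t t = mat2 (complex_of_real (exp (t/2))) 0 0 (complex_of_real (exp (-t/2)))"

definition Aplus :: "real \<Rightarrow> mat2 set" where
  "Aplus s = {a_t t | t. 0 \<le> t \<and> t \<le> s}"

definition Mgrp :: "mat2 set" where
  "Mgrp = {mat2 (cis \<theta>) 0 0 (cis (-\<theta>)) | \<theta>. True}"

definition moeb :: "mat2 \<Rightarrow> complex \<Rightarrow> complex" where
  "moeb g z = (g$1$1 * z + g$1$2) / (g$2$1 * z + g$2$2)"

definition unit_circle :: "complex set" where
  "unit_circle = {z. cmod z = 1}"

definition Hgrp :: "mat2 set" where
  "Hgrp = {g \<in> SL2. (\<forall>z\<in>unit_circle. g$2$1 * z + g$2$2 \<noteq> 0) \<and> moeb g ` unit_circle = unit_circle}"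

definition setmul :: "mat2 set \<Rightarrow> mat2 set \<Rightarrow> mat2 set" (infixl "\<odot>" 70) where
  "A \<odot> B = {x ** y | x y. x \<in> A \<and> y \<in> B}"

definition K_T :: "real \<Rightarrow> real \<Rightarrow> mat2 set" where
  "K_T T t = {k \<in> Kgrp. a_t t ** k \<in> Hgrp \<odot> Kgrp \<odot> Aplus (ln T)}"

text \<open>A left-invariant metric on G = SL_2(C)/{+-1} inducing its topology,
  given as a function on SL_2(C) that only depends on classes mod sign.\<close>
definition G_left_inv_metric :: "(mat2 \<Rightarrow> mat2 \<Rightarrow> real) \<Rightarrow> bool" where
  "G_left_inv_metric d \<longleftrightarrow>
     (\<forall>x\<in>SL2. \<forall>y\<in>SL2. d x y = d (-x) y \<and> d x y = d x (-y)) \<and>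
     (\<forall>x\<in>SL2. \<forall>y\<in>SL2. 0 \<le> d x y \<and> (d x y = 0 \<longleftrightarrow> (y = x \<or> y = -x)) \<and> d x y = d y x) \<and>
     (\<forall>x\<in>SL2. \<forall>y\<in>SL2. \<forall>z\<in>SL2. d x z \<le> d x y + d y z) \<and>
     (\<forall>g\<in>SL2. \<forall>x\<in>SL2. \<forall>y\<in>SL2. d (g ** x) (g ** y) = d x y) \<and>
     (\<forall>\<epsilon>>0. \<exists>\<delta>>0. \<forall>y\<in>SL2. norm (y - mat 1) < \<delta> \<longrightarrow> d (mat 1) y < \<epsilon>) \<and>
     (\<forall>\<delta>>0. \<exists>\<epsilon>>0. \<forall>y\<in>SL2. d (mat 1) y < \<epsilon> \<longrightarrow>
                norm (y - mat 1) < \<delta> \<or> norm (y + mat 1) < \<delta>)"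

definition U_eps :: "(mat2 \<Rightarrow> mat2 \<Rightarrow> real) \<Rightarrow> real \<Rightarrow> mat2 set" where
  "U_eps d \<epsilon> = {g \<in> SL2. d (mat 1) g < \<epsilon>}"

definition K_eps :: "(mat2 \<Rightarrow> mat2 \<Rightarrow> real) \<Rightarrow> real \<Rightarrow> mat2 set" where
  "K_eps d \<epsilon> = Kgrp \<inter> U_eps d \<epsilon>"

end

theory Submission imports Defs begin

lemma mat2_nth [simp]:
  "mat2 a b c d $ 1 $ 1 = a" "mat2 a b c d $ 1 $ 2 = b"
  "mat2 a b c d $ 2 $ 1 = c" "mat2 a b c d $ 2 $ 2 = d"
  by (simp_all add: mat2_def)

lemma mat2_eta: "(g::mat2) = mat2 (g$1$1) (g$1$2) (g$2$1) (g$2$2)"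
  unfolding vec_eq_iff forall_2 by simp

lemma mat2_eq_iff: "mat2 a b c d = mat2 a' b' c' d' \<longleftrightarrow> a = a' \<and> b = b' \<and> c = c' \<and> d = d'"
  by (metis mat2_nth)

lemma mat2_mult [simp]: "mat2 a b c d ** mat2 e f g h = mat2 (a*e+b*g) (a*f+b*h) (c*e+d*g) (c*f+d*h)"
  unfolding vec_eq_iff forall_2 by (simp add: matrix_matrix_mult_def sum_2)

lemma mat2_det [simp]: "det (mat2 a b c d) = a*d - b*c"
  by (simp add: det_2 mult.commute)

lemma mat2_ct [simp]: "cnj_transpose (mat2 a b c d) = mat2 (cnj a) (cnj c) (cnj b) (cnj d)"
  unfolding vec_eq_iff forall_2 by (simp add: cnj_transpose_def)

lemma mat2_one: "(mat 1 :: mat2) = mat2 1 0 0 1"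
  unfolding vec_eq_iff forall_2 by (simp add: mat_def)

lemma mat2_uminus [simp]: "- mat2 a b c d = mat2 (-a) (-b) (-c) (-d)"
  unfolding vec_eq_iff forall_2 by simp

lemma mat2_minus [simp]: "mat2 a b c d - mat2 a' b' c' d' = mat2 (a-a') (b-b') (c-c') (d-d')"
  unfolding vec_eq_iff forall_2 by simp

lemma mat2_norm_le: "norm (mat2 a b c d) \<le> cmod a + cmod b + cmod c + cmod d"
proof -
  have "norm (mat2 a b c d) \<le> (\<Sum>i\<in>UNIV. norm (mat2 a b c d $ i))"
    unfolding norm_vec_def by (rule L2_set_le_sum) simp
  also have "\<dots> = norm (mat2 a b c d $ 1) + norm (mat2 a b c d $ 2)" by (simp add: sum_2)
  also have "norm (mat2 a b c d $ 1) \<le> cmod a + cmod b"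
  proof -
    have "norm (mat2 a b c d $ 1) \<le> (\<Sum>i\<in>UNIV. norm (mat2 a b c d $ 1 $ i))"
      unfolding norm_vec_def by (rule L2_set_le_sum) simp
    then show ?thesis by (simp add: sum_2)
  qed
  also have "norm (mat2 a b c d $ 2) \<le> cmod c + cmod d"
  proof -
    have "norm (mat2 a b c d $ 2) \<le> (\<Sum>i\<in>UNIV. norm (mat2 a b c d $ 2 $ i))"
      unfolding norm_vec_def by (rule L2_set_le_sum) simp
    then show ?thesis by (simp add: sum_2)
  qed
  finally show ?thesis by simp
qed

lemma K_form:
  assumes "k \<in> Kgrp"
  shows "k = mat2 (k$1$1) (k$1$2) (- cnj (k$1$2)) (cnj (k$1$1))"
        "k$1$1 * cnj (k$1$1) + k$1$2 * cnj (k$1$2) = 1"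
proof -
  obtain a b c d where k: "k = mat2 a b c d" by (rule that[OF mat2_eta])
  from assms have e: "a*d - b*c = 1" "mat2 (a * cnj a + b * cnj b) (a * cnj c + b * cnj d)
     (c * cnj a + d * cnj b) (c * cnj c + d * cnj d) = mat2 1 0 0 1"
    unfolding Kgrp_def SL2_def k mat2_one by auto
  hence e2: "a * cnj a + b * cnj b = 1" "c * cnj a + d * cnj b = 0" unfolding mat2_eq_iff by auto
  have db: "d * cnj b = - (c * cnj a)" using e2(2) by (metis add_eq_0_iff2 add.commute)
  have "d = d * (a * cnj a + b * cnj b)" using e2 by simp
  also have "\<dots> = cnj a * (a*d) + b * (d * cnj b)" by (simp add: algebra_simps)
  also have "\<dots> = cnj a * (a*d) + b * (- c * cnj a)" using db by simp
  also have "\<dots> = cnj a * (a*d - b*c)" by (simp add: algebra_simps)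
  finally have dd: "d = cnj a" using e by simp
  have "c = c * (a * cnj a + b * cnj b)" using e2 by simp
  also have "\<dots> = a * (c * cnj a) + c * b * cnj b" by (simp add: algebra_simps)
  also have "\<dots> = a * (- (d * cnj b)) + c * b * cnj b" using db by simp
  also have "\<dots> = - cnj b * (a*d - b*c)" by (simp add: algebra_simps)
  finally have cc: "c = - cnj b" using e by simp
  show "k = mat2 (k$1$1) (k$1$2) (- cnj (k$1$2)) (cnj (k$1$1))" using k cc dd by simp
  show "k$1$1 * cnj (k$1$1) + k$1$2 * cnj (k$1$2) = 1" using k e2 by simp
qed

lemma K_mem:
  assumes "a * cnj a + b * cnj b = 1"
  shows "mat2 a b (- cnj b) (cnj a) \<in> Kgrp"
  using assms unfolding Kgrp_def SL2_def mat2_one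
  by (simp add: mat2_eq_iff algebra_simps)

lemma cmod_sq_c: "complex_of_real (cmod z ^ 2) = z * cnj z"
  using complex_norm_square[of z] by (metis of_real_power)

lemma row_identity:
  fixes a b p q :: complex
  assumes "p * cnj p + q * cnj q = 1"
  shows "cmod (a*p + b*(- cnj q)) ^ 2 + cmod (a*q + b*cnj p) ^ 2 = cmod a ^ 2 + cmod b ^ 2"
proof -
  have "complex_of_real (cmod (a*p + b*(- cnj q)) ^ 2 + cmod (a*q + b*cnj p) ^ 2)
     = (a*p + b*(- cnj q)) * cnj (a*p + b*(- cnj q)) + (a*q + b*cnj p) * cnj (a*q + b*cnj p)"
    by (simp only: of_real_add cmod_sq_c)
  also have "\<dots> = (a * cnj a + b * cnj b) * (p * cnj p + q * cnj q)"
    by (simp add: algebra_simps)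
  also have "\<dots> = complex_of_real (cmod a ^ 2 + cmod b ^ 2)"
    using assms by (simp only: of_real_add cmod_sq_c mult_1_right)
  finally show ?thesis using of_real_eq_iff by blast
qed

lemma H_rows:
  assumes "h \<in> Hgrp"
  shows "cmod (h$1$1) ^ 2 + cmod (h$1$2) ^ 2 = cmod (h$2$1) ^ 2 + cmod (h$2$2) ^ 2"
proof -
  obtain a b c d where h: "h = mat2 a b c d" by (rule that[OF mat2_eta])
  have circ: "1 \<in> unit_circle" "-1 \<in> unit_circle" by (auto simp: unit_circle_def)
  from assms have nz: "c * 1 + d \<noteq> 0" "c * (-1) + d \<noteq> 0" and im: "moeb h 1 \<in> unit_circle" "moeb h (-1) \<in> unit_circle"
    using circ unfolding Hgrp_def h by auto
  from im(1) nz(1) have e1: "cmod (a + b) = cmod (c + d)"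
    by (simp add: moeb_def unit_circle_def h norm_divide divide_eq_1_iff)
  from im(2) nz(2) have e2: "cmod (b - a) = cmod (d - c)"
    by (simp add: moeb_def unit_circle_def h norm_divide divide_eq_1_iff)
  have "complex_of_real (2 * (cmod a ^ 2 + cmod b ^ 2)) = complex_of_real (cmod (a + b)^2 + cmod (b - a)^2)"
    by (simp only: of_real_add of_real_mult cmod_sq_c) (simp add: algebra_simps)
  also have "\<dots> = complex_of_real (cmod (c + d)^2 + cmod (d - c)^2)" using e1 e2 by simp
  also have "\<dots> = complex_of_real (2 * (cmod c ^ 2 + cmod d ^ 2))"
    by (simp only: of_real_add of_real_mult cmod_sq_c) (simp add: algebra_simps)
  finally have "2 * (cmod a ^ 2 + cmod b ^ 2) = 2 * (cmod c ^ 2 + cmod d ^ 2)" using of_real_eq_iff by blast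
  thus ?thesis unfolding h by simp
qed

lemma exp_half_sq: "exp ((x::real)/2) ^ 2 = exp x"
  by (simp add: power2_eq_square flip: exp_add)

lemma a_t_inv: "a_t s ** a_t (-s) = mat 1"
  unfolding a_t_def mat2_one mat2_mult
  by (simp flip: of_real_mult exp_add)

lemma core:
  assumes "k \<in> Kgrp" "h \<in> Hgrp" "k' \<in> Kgrp" "a_t t ** k = (h ** k') ** a_t s"
  shows "exp t * (cmod (k$1$1)^2 * exp(-s) + cmod(k$1$2)^2 * exp s)
       = exp(-t) * (cmod(k$1$2)^2 * exp(-s) + cmod(k$1$1)^2 * exp s)"
proof -
  have M: "a_t t ** k ** a_t (-s) = h ** k'"
    using assms(4) by (metis a_t_inv matrix_mul_assoc matrix_mul_rid)
  define \<alpha> where "\<alpha> = k$1$1"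
  define \<beta> where "\<beta> = k$1$2"
  define p where "p = k'$1$1"
  define q where "q = k'$1$2"
  have kf: "k = mat2 \<alpha> \<beta> (- cnj \<beta>) (cnj \<alpha>)" unfolding \<alpha>_def \<beta>_def by (rule K_form[OF assms(1)])
  have k'f: "k' = mat2 p q (- cnj q) (cnj p)" unfolding p_def q_def by (rule K_form[OF assms(3)])
  have pq: "p * cnj p + q * cnj q = 1" unfolding p_def q_def by (rule K_form[OF assms(3)])
  obtain a b c d where h: "h = mat2 a b c d" by (rule that[OF mat2_eta])
  have hr: "cmod a ^ 2 + cmod b ^ 2 = cmod c ^ 2 + cmod d ^ 2" using H_rows[OF assms(2)] h by simp
  let ?E1 = "complex_of_real (exp (t/2))" and ?E2 = "complex_of_real (exp (-t/2))"
  let ?F1 = "complex_of_real (exp (-s/2))" and ?F2 = "complex_of_real (exp (s/2))"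
  have Mc: "mat2 (?E1 * \<alpha> * ?F1) (?E1 * \<beta> * ?F2) (- ?E2 * cnj \<beta> * ?F1) (?E2 * cnj \<alpha> * ?F2)
      = mat2 (a*p + b*(- cnj q)) (a*q + b*cnj p) (c*p + d*(- cnj q)) (c*q + d*cnj p)"
    using M unfolding kf k'f h a_t_def by (simp add: algebra_simps)
  hence c1: "?E1 * \<alpha> * ?F1 = a*p + b*(- cnj q)" "?E1 * \<beta> * ?F2 = a*q + b*cnj p"
    and c2: "- ?E2 * cnj \<beta> * ?F1 = c*p + d*(- cnj q)" "?E2 * cnj \<alpha> * ?F2 = c*q + d*cnj p"
    unfolding mat2_eq_iff by auto
  have r1: "cmod (?E1 * \<alpha> * ?F1) ^ 2 + cmod (?E1 * \<beta> * ?F2) ^ 2 = cmod a ^ 2 + cmod b ^ 2"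
    unfolding c1 by (rule row_identity[OF pq])
  have r2: "cmod (- ?E2 * cnj \<beta> * ?F1) ^ 2 + cmod (?E2 * cnj \<alpha> * ?F2) ^ 2 = cmod c ^ 2 + cmod d ^ 2"
    unfolding c2 by (rule row_identity[OF pq])
  have "cmod (?E1 * \<alpha> * ?F1) ^ 2 + cmod (?E1 * \<beta> * ?F2) ^ 2
      = exp t * (cmod \<alpha>^2 * exp(-s) + cmod \<beta>^2 * exp s)"
    by (simp add: norm_mult power_mult_distrib exp_half_sq algebra_simps
        exp_half_sq[of t, simplified] exp_half_sq[of "-s", simplified] exp_half_sq[of s, simplified])
  moreover have "cmod (- ?E2 * cnj \<beta> * ?F1) ^ 2 + cmod (?E2 * cnj \<alpha> * ?F2) ^ 2
      = exp (-t) * (cmod \<beta>^2 * exp(-s) + cmod \<alpha>^2 * exp s)"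
    by (simp add: norm_mult power_mult_distrib algebra_simps
        exp_half_sq[of "-t", simplified] exp_half_sq[of "-s", simplified] exp_half_sq[of s, simplified])
  ultimately show ?thesis using r1 r2 hr unfolding \<alpha>_def \<beta>_def by simp
qed

lemma ineq2:
  fixes P Q u v :: real
  assumes "P \<ge> 0" "Q \<ge> 0" "P + Q = 1" "v \<ge> 1" "u > v"
  shows "u * (P / v + Q * v) > (1/u) * (Q / v + P * v)"
proof -
  have v0: "v > 0" "u > 0" using assms by auto
  have "u * (P / v + Q * v) * (u * v) = u^2 * (P + Q * v^2)" using v0 by (simp add: field_simps power2_eq_square)
  moreover have "(1/u) * (Q / v + P * v) * (u * v) = Q + P* v^2" using v0 by (simp add: field_simps power2_eq_square)
  moreover have "u^2 * (P + Q * v^2) > Q + P* v^2"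
  proof -
    have "u^2 > v^2" using assms by (intro power_strict_mono) auto
    have "v^2 \<ge> 1" using assms by (simp add: one_le_power)
    have "u^2 \<le> u^2 * v^2" using mult_left_mono[of 1 "v^2" "u^2"] \<open>v^2 \<ge> 1\<close> by simp
    hence uv: "u^2* v^2 > 1" using \<open>u^2 > v^2\<close> \<open>v^2 \<ge> 1\<close> by linarith
    have "u^2 * (P + Q* v^2) - (Q + P* v^2) = P*(u^2 - v^2) + Q*(u^2* v^2 - 1)" by (simp add: algebra_simps)
    moreover have "P*(u^2 - v^2) + Q*(u^2* v^2 - 1) > 0"
    proof (cases "P > 0")
      case True
      have "P*(u^2 - v^2) > 0" using True \<open>u^2 > v^2\<close> by simp
      moreover have "Q*(u^2* v^2 - 1) \<ge> 0" using assms(2) \<open>u^2 > v^2\<close> \<open>v^2 \<ge> 1\<close>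
        using uv by (intro mult_nonneg_nonneg) auto
      ultimately show ?thesis by linarith
    next
      case False
      hence "Q = 1" "P = 0" using assms by auto
      thus ?thesis using uv by simp
    qed
    ultimately show ?thesis by linarith
  qed
  ultimately show ?thesis using v0 by (metis mult_less_cancel_right_pos mult_pos_pos)
qed

lemma ineq3:
  fixes P Q u v :: real
  assumes "P \<ge> 0" "Q \<ge> 0" "P + Q = 1" "v \<ge> 1" "u \<ge> 1"
    and eq: "u * (P / v + Q * v) = (1/u) * (Q / v + P * v)"
  shows "Q * u^2 \<le> 1"
proof (rule ccontr)
  assume c: "\<not> Q * u^2 \<le> 1"
  have v0: "v > 0" "u > 0" using assms by auto
  have "u * (P / v + Q * v) * (u * v) = u^2 * (P + Q * v^2)" using v0 by (simp add: field_simps power2_eq_square)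
  moreover have "(1/u) * (Q / v + P * v) * (u * v) = Q + P* v^2" using v0 by (simp add: field_simps power2_eq_square)
  ultimately have e: "u^2 * (P + Q * v^2) = Q + P* v^2" using eq by simp
  have "v^2 \<ge> 1" "u^2 \<ge> 1" using assms by (simp_all add: one_le_power)
  have "1 * v^2 < (Q * u^2) * v^2" using c \<open>v^2 \<ge> 1\<close> by (intro mult_strict_right_mono) auto
  hence "Q * u^2 * v^2 > v^2" by simp
  moreover have "P * u^2 \<ge> P" using \<open>u^2 \<ge> 1\<close> assms(1) mult_left_mono[of 1 "u^2" P] by simp
  moreover have "Q * v^2 \<ge> Q" using \<open>v^2 \<ge> 1\<close> assms(2) mult_left_mono[of 1 "v^2" Q] by simp
  moreover have "P* v^2 + Q* v^2 = v^2" using assms(3) by (metis distrib_right mult_1)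
  ultimately show False using e assms(1,3) by (simp add: algebra_simps)
qed

lemma core_uv:
  assumes "k \<in> Kgrp" "h \<in> Hgrp" "k' \<in> Kgrp" "a_t t ** k = (h ** k') ** a_t s"
  shows "exp t * (cmod (k$1$1)^2 / exp s + cmod(k$1$2)^2 * exp s)
       = (1 / exp t) * (cmod(k$1$2)^2 / exp s + cmod(k$1$1)^2 * exp s)"
  using core[OF assms] by (simp add: exp_minus field_simps)

lemma K_PQ: "k \<in> Kgrp \<Longrightarrow> cmod (k$1$1)^2 + cmod (k$1$2)^2 = 1"
proof -
  assume "k \<in> Kgrp"
  from K_form(2)[OF this] have "complex_of_real (cmod (k$1$1)^2 + cmod (k$1$2)^2) = 1"
    by (simp only: of_real_add cmod_sq_c)
  thus ?thesis by (metis of_real_eq_1_iff)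
qed

lemma extract_KT:
  assumes "k \<in> K_T T t"
  shows "k \<in> Kgrp \<and> (\<exists>h k' s. h \<in> Hgrp \<and> k' \<in> Kgrp \<and> 0 \<le> s \<and> s \<le> ln T \<and> a_t t ** k = (h ** k') ** a_t s)"
  using assms unfolding K_T_def setmul_def Aplus_def by blast

lemma mat1_K: "mat 1 \<in> Kgrp"
  using K_mem[of 1 0] by (simp add: mat2_one)

lemma mat1_H: "mat 1 \<in> Hgrp"
  unfolding Hgrp_def SL2_def mat2_one by (simp add: moeb_def)

lemma K_SL2: "Kgrp \<subseteq> SL2" unfolding Kgrp_def by auto

lemma lin_help: "a \<le> e \<Longrightarrow> b \<le> e \<Longrightarrow> 2*a + 2*b \<le> 4*(e::real)" by linarith
lemma lin_help2: "e < d/4 \<Longrightarrow> 4*e < (d::real)" by linarith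

theorem corollary4p3:
  fixes d :: "complex^2^2 \<Rightarrow> complex^2^2 \<Rightarrow> real"
  assumes "G_left_inv_metric d"
  shows "(\<forall>T t. T > 1 \<and> 0 \<le> t \<and> t < ln T \<longrightarrow> mat 1 \<in> K_T T t)
       \<and> (\<forall>T t. T > 1 \<and> t > ln T \<longrightarrow> K_T T t = {})
       \<and> (\<forall>\<epsilon>>0. \<exists>T0\<ge>1. \<forall>T>1. \<forall>t>T0. K_T T t \<subseteq> K_eps d \<epsilon> \<odot> Mgrp)"
proof (intro conjI allI impI)
  fix T t :: real
  assume a: "T > 1 \<and> 0 \<le> t \<and> t < ln T"
  have "a_t t \<in> Aplus (ln T)" using a unfolding Aplus_def by auto
  moreover have "mat 1 ** mat 1 \<in> Hgrp \<odot> Kgrp" unfolding setmul_def using mat1_H mat1_K by blast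
  ultimately have "(mat 1 ** mat 1) ** a_t t \<in> Hgrp \<odot> Kgrp \<odot> Aplus (ln T)"
    unfolding setmul_def by blast
  thus "mat 1 \<in> K_T T t" unfolding K_T_def using mat1_K by simp
next
  fix T t :: real
  assume a: "T > 1 \<and> t > ln T"
  show "K_T T t = {}"
  proof (rule ccontr)
    assume "K_T T t \<noteq> {}"
    then obtain k where "k \<in> K_T T t" by blast
    from extract_KT[OF this] obtain h k' s where k: "k \<in> Kgrp" "h \<in> Hgrp" "k' \<in> Kgrp" "0 \<le> s" "s \<le> ln T"
      "a_t t ** k = (h ** k') ** a_t s" by blast
    have "exp t > exp s" using a k by simp
    moreover have "exp s \<ge> 1" using k by simp
    ultimately have "exp t * (cmod (k$1$1)^2 / exp s + cmod(k$1$2)^2 * exp s)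
       > (1 / exp t) * (cmod(k$1$2)^2 / exp s + cmod(k$1$1)^2 * exp s)"
      using K_PQ[OF k(1)] by (intro ineq2) auto
    thus False using core_uv[OF k(1-3,6)] by simp
  qed
next
  fix \<epsilon> :: real
  assume "\<epsilon> > 0"
  then obtain \<delta> where \<delta>: "\<delta> > 0" "\<forall>y\<in>SL2. norm (y - mat 1) < \<delta> \<longrightarrow> d (mat 1) y < \<epsilon>"
    using assms unfolding G_left_inv_metric_def by meson
  define T0 where "T0 = max 1 (ln (4/\<delta>))"
  show "\<exists>T0\<ge>1. \<forall>T>1. \<forall>t>T0. K_T T t \<subseteq> K_eps d \<epsilon> \<odot> Mgrp"
  proof (intro exI[of _ T0] conjI allI impI subsetI)
    show "T0 \<ge> 1" unfolding T0_def by simp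
    fix T t k :: real
    fix k
    assume t: "t > T0" and kT: "k \<in> K_T T t"
    from extract_KT[OF kT] obtain h k' s where k: "k \<in> Kgrp" "h \<in> Hgrp" "k' \<in> Kgrp" "0 \<le> s"
      "a_t t ** k = (h ** k') ** a_t s" by blast
    define \<alpha> where "\<alpha> = k$1$1"
    define \<beta> where "\<beta> = k$1$2"
    define r where "r = cmod \<alpha>"
    have PQ: "r^2 + cmod \<beta>^2 = 1" using K_PQ[OF k(1)] unfolding r_def \<alpha>_def \<beta>_def .
    have t1: "t > 1" "exp t \<ge> 1" using t unfolding T0_def by auto
    have "cmod \<beta>^2 * (exp t)^2 \<le> 1"
      using ineq3[OF _ _ PQ _ t1(2) core_uv[OF k(1-3,5), folded \<alpha>_def \<beta>_def r_def]] k(4) by simp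
    hence Qb: "cmod \<beta>^2 \<le> (1/exp t)^2" by (simp add: field_simps)
    hence bb: "cmod \<beta> \<le> 1/exp t" by (rule power2_le_imp_le) simp
    have r0: "r \<ge> 0" "r \<le> 1"
    proof -
      show "r \<ge> 0" unfolding r_def by simp
      have "0 \<le> cmod \<beta>^2" by simp
      hence "r^2 \<le> 1" using PQ by linarith
      hence "r^2 \<le> 1^2" by simp
      thus "r \<le> 1" by (rule power2_le_imp_le) simp
    qed
    have "r^2 \<le> r" using r0 by (simp add: power2_eq_square mult_left_le)
    hence r1: "1 - r \<le> (1/exp t)^2" using PQ Qb by linarith
    have et: "1/exp t < \<delta>/4"
    proof -
      have "t > ln (4/\<delta>)" using t unfolding T0_def by simp
      hence "exp t > 4/\<delta>" using \<delta>(1) by (metis exp_less_cancel_iff exp_ln zero_less_divide_iff zero_less_numeral)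
      thus ?thesis using \<delta>(1) by (simp add: field_simps)
    qed
    have et1: "1/exp t \<le> 1" using t1 by simp
    have "(1/exp t)^2 \<le> 1/exp t" unfolding power2_eq_square by (rule mult_left_le[OF et1]) simp
    define \<theta> where "\<theta> = Arg \<alpha>"
    have \<alpha>r: "\<alpha> * cis (-\<theta>) = complex_of_real r"
    proof -
      have "\<alpha> = complex_of_real r * cis \<theta>" unfolding r_def \<theta>_def by (metis rcis_cmod_Arg rcis_def)
      hence "\<alpha> * cis (-\<theta>) = complex_of_real r * (cis \<theta> * cis (-\<theta>))" by simp
      also have "\<dots> = complex_of_real r" by (simp add: cis_mult)
      finally show ?thesis .
    qed
    define x where "x = mat2 (complex_of_real r) (\<beta> * cis \<theta>) (- cnj (\<beta> * cis \<theta>)) (cnj (complex_of_real r))"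
    define y where "y = mat2 (cis \<theta>) 0 0 (cis (-\<theta>))"
    have kf: "k = mat2 \<alpha> \<beta> (- cnj \<beta>) (cnj \<alpha>)" unfolding \<alpha>_def \<beta>_def by (rule K_form[OF k(1)])
    have "x ** y = k"
    proof -
      have "x ** y = mat2 (complex_of_real r * cis \<theta>) \<beta> (- cnj \<beta>) (complex_of_real r * cis (-\<theta>))"
        unfolding x_def y_def by (simp add: mult.assoc cis_cnj cis_mult)
      also have "\<dots> = k"
      proof -
        have "\<alpha> = \<alpha> * (cis (-\<theta>) * cis \<theta>)" by (simp add: cis_mult)
        also have "\<dots> = complex_of_real r * cis \<theta>" using \<alpha>r by (simp add: mult.assoc[symmetric])
        finally have a1: "complex_of_real r * cis \<theta> = \<alpha>" by simp
        hence "complex_of_real r * cis (-\<theta>) = cnj \<alpha>" by (auto simp: cis_cnj)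
        with a1 show ?thesis unfolding kf by simp
      qed
      finally show ?thesis .
    qed
    moreover have "y \<in> Mgrp" unfolding y_def Mgrp_def by blast
    moreover have "x \<in> Kgrp"
    proof -
      have "complex_of_real r * cnj (complex_of_real r) + (\<beta> * cis \<theta>) * cnj (\<beta> * cis \<theta>)
          = complex_of_real (r^2) + \<beta> * cnj \<beta> * (cis \<theta> * cnj (cis \<theta>))"
        by (simp add: power2_eq_square algebra_simps)
      also have "cis \<theta> * cnj (cis \<theta>) = 1" by (simp add: cis_cnj cis_mult)
      also have "\<beta> * cnj \<beta> = complex_of_real (cmod \<beta>^2)" by (rule cmod_sq_c[symmetric])
      also have "complex_of_real (r^2) + complex_of_real (cmod \<beta>^2) * 1 = complex_of_real (r^2 + cmod \<beta>^2)" by simp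
      also have "\<dots> = 1" using PQ by simp
      finally show ?thesis unfolding x_def by (rule K_mem)
    qed
    moreover have "d (mat 1) x < \<epsilon>"
    proof -
      have "norm (x - mat 1) \<le> cmod (complex_of_real r - 1) + cmod (\<beta> * cis \<theta>) + cmod (- cnj (\<beta> * cis \<theta>)) + cmod (complex_of_real r - 1)"
        unfolding x_def mat2_one mat2_minus by (rule order_trans[OF mat2_norm_le]) simp
      also have "\<dots> = 2 * (1 - r) + 2 * cmod \<beta>"
      proof -
        have "cmod (complex_of_real r - 1) = 1 - r"
        proof -
          have "complex_of_real r - 1 = complex_of_real (r - 1)" by simp
          hence "cmod (complex_of_real r - 1) = \<bar>r - 1\<bar>" by (simp only: norm_of_real)
          thus ?thesis using r0 by simp
        qed
        moreover have "cmod (\<beta> * cis \<theta>) = cmod \<beta>" by (simp add: norm_mult)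
        moreover have "cmod (- cnj (\<beta> * cis \<theta>)) = cmod \<beta>" by (simp add: norm_mult)
        ultimately show ?thesis by simp
      qed
      also have "\<dots> < \<delta>"
      proof -
        have "1 - r \<le> 1/exp t" using r1 \<open>(1/exp t)^2 \<le> 1/exp t\<close> by linarith
        hence "2 * (1 - r) + 2 * cmod \<beta> \<le> 4 * (1/exp t)" using bb by (rule lin_help)
        moreover have "4 * (1/exp t) < \<delta>" using et by (rule lin_help2)
        ultimately show ?thesis by linarith
      qed
      finally show ?thesis using \<delta>(2) \<open>x \<in> Kgrp\<close> K_SL2 by blast
    qed
    ultimately show "k \<in> K_eps d \<epsilon> \<odot> Mgrp"
      unfolding K_eps_def U_eps_def setmul_def using K_SL2 by blast
  qed
qed

end
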